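(* Let $m,n\ge1$, $a\in(0,\infty)^m$, $b\in(0,\infty)^n$, and let $\Omega$ be a real $m\times n$ matrix. The operators $T_1,T_2$ map the interior of $\tilde{\mathcal A}$ into the interior of $\tilde{\mathcal A}$. Moreover, for $(A,B)$ in the interior of $\tilde{\mathcal A}$, letting $\tilde{\mathcal A}_{(-,B)}=\{(A',B)\in\tilde{\mathcal A}\}$ and $\tilde{\mathcal A}_{(A,-)}=\{(A,B')\in\tilde{\mathcal A}\}$: (1) $T_1(A,B)$ is the unique point of $\tilde{\mathcal A}_{(-,B)}$ attaining $\sup_{(A',B)\in\tilde{\mathcal A}_{(-,B)}}F(A',B)$; (2) $T_2(A,B)$ is the unique point of $\tilde{\mathcal A}_{(A,-)}$ attaining $\sup_{(A,B')\in\tilde{\mathcal A}_{(A,-)}}F(A,B')$.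
   Context: $\mathcal A$ is the set of pairs $(A,B)$ of $(m+1)\times(n+1)$ real matrices (indices $i=0,\dots,m$, $j=0,\dots,n$) with: $A_{ij},B_{ij}\ge0$; $a_i=\sum_{j=0}^nA_{ij}$ for $i=1,\dots,m$; $A_{0j}=0$ for all $j$; $b_j=\sum_{i=0}^mB_{ij}$ for $j=1,\dots,n$; $B_{i0}=0$ for all $i$. $F(A,B)=\sum_{i=1}^m\sum_{j=1}^n\sqrt{A_{ij}B_{ij}}\,\Omega_{ij}$. $\tilde{\mathcal A}\subset\mathcal A$ consists of those $(A,B)$ with: (1) $A_{ij}=B_{ij}=0$ whenever $i,j\ge1$ and $\Omega_{ij}\le0$; (2) for $j\ge1$, $B_{0j}=0$ if there is $i\ge1$ with $\Omega_{ij}>0$; (3) for $i\ge1$, $A_{i0}=0$ if there is $j\ge1$ with $\Omega_{ij}>0$. $T_1(A,B)=(E,B)$ where $E_{ij}=A_{ij}$ if $i=0$ or $j=0$, and otherwise $E_{ij}=a_iB_{ij}\Omega_{ij}^2/\sum_{k=1}^nB_{ik}\Omega_{ik}^2$ if this denominator is positive and $0$ otherwise. $T_2(A,B)=(A,E)$ where $E_{ij}=B_{ij}$ if $i=0$ or $j=0$, and otherwise $E_{ij}=b_jA_{ij}\Omega_{ij}^2/\sum_{k=1}^mA_{kj}\Omega_{kj}^2$ if this denominator is positive and $0$ otherwise. "Interior" refers to the interior of the convex set $\tilde{\mathcal A}$ relative to the affine space it spans. *)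

theory Defs
  imports "HOL-Analysis.Analysis"
begin

text \<open>Index conventions: rows of the (m+1)x(n+1) matrices are indexed by the type
  'm option, where None plays the role of index 0 and Some i the indices 1..m
  (with m = CARD('m) \<ge> 1); similarly columns by 'n option.\<close>

type_synonym ('m, 'n) mat = "real ^ ('n option) ^ ('m option)"

definition AA :: "real ^ 'm \<Rightarrow> real ^ 'n \<Rightarrow> (('m::finite, 'n::finite) mat \<times> ('m, 'n) mat) set" where
  "AA a b = {(A, B).
      (\<forall>i j. A $ i $ j \<ge> 0 \<and> B $ i $ j \<ge> 0) \<and>
      (\<forall>i. a $ i = (\<Sum>j\<in>UNIV. A $ Some i $ j)) \<and>
      (\<forall>j. A $ None $ j = 0) \<and>
      (\<forall>j. b $ j = (\<Sum>i\<in>UNIV. B $ i $ Some j)) \<and>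
      (\<forall>i. B $ i $ None = 0)}"

definition F :: "real ^ 'n ^ 'm \<Rightarrow> ('m::finite, 'n::finite) mat \<times> ('m, 'n) mat \<Rightarrow> real" where
  "F \<Omega> AB = (\<Sum>i\<in>UNIV. \<Sum>j\<in>UNIV.
      sqrt (fst AB $ Some i $ Some j * snd AB $ Some i $ Some j) * \<Omega> $ i $ j)"

definition AAt :: "real ^ 'm \<Rightarrow> real ^ 'n \<Rightarrow> real ^ 'n ^ 'm
    \<Rightarrow> (('m::finite, 'n::finite) mat \<times> ('m, 'n) mat) set" where
  "AAt a b \<Omega> = {(A, B) \<in> AA a b.
      (\<forall>i j. \<Omega> $ i $ j \<le> 0 \<longrightarrow> A $ Some i $ Some j = 0 \<and> B $ Some i $ Some j = 0) \<and>
      (\<forall>j. (\<exists>i. \<Omega> $ i $ j > 0) \<longrightarrow> B $ None $ Some j = 0) \<and>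
      (\<forall>i. (\<exists>j. \<Omega> $ i $ j > 0) \<longrightarrow> A $ Some i $ None = 0)}"

definition T1 :: "real ^ 'm \<Rightarrow> real ^ 'n ^ 'm \<Rightarrow> ('m::finite, 'n::finite) mat \<times> ('m, 'n) mat
    \<Rightarrow> ('m, 'n) mat \<times> ('m, 'n) mat" where
  "T1 a \<Omega> AB = (let A = fst AB; B = snd AB in
     ((\<chi> i j. case (i, j) of
         (Some i', Some j') \<Rightarrow>
            (let d = (\<Sum>k\<in>UNIV. B $ Some i' $ Some k * (\<Omega> $ i' $ k)\<^sup>2) in
             if d > 0 then a $ i' * B $ Some i' $ Some j' * (\<Omega> $ i' $ j')\<^sup>2 / d else 0)
       | _ \<Rightarrow> A $ i $ j), B))"

definition T2 :: "real ^ 'n \<Rightarrow> real ^ 'n ^ 'm \<Rightarrow> ('m::finite, 'n::finite) mat \<times> ('m, 'n) mat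
    \<Rightarrow> ('m, 'n) mat \<times> ('m, 'n) mat" where
  "T2 b \<Omega> AB = (let A = fst AB; B = snd AB in
     (A, (\<chi> i j. case (i, j) of
         (Some i', Some j') \<Rightarrow>
            (let d = (\<Sum>k\<in>UNIV. A $ Some k $ Some j' * (\<Omega> $ k $ j')\<^sup>2) in
             if d > 0 then b $ j' * A $ Some i' $ Some j' * (\<Omega> $ i' $ j')\<^sup>2 / d else 0)
       | _ \<Rightarrow> B $ i $ j)))"

end

theory Submission
  imports Defs
begin

lemma sum_option: "(\<Sum>j\<in>(UNIV::'a::finite option set). f j) = f None + (\<Sum>j\<in>UNIV. f (Some j))"
  by (simp add: UNIV_option_conv sum.reindex)

definition alA :: "real ^ 'n ^ 'm \<Rightarrow> 'm::finite option \<Rightarrow> 'n::finite option \<Rightarrow> bool" where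
  "alA \<Omega> p q = (case p of None \<Rightarrow> False | Some i \<Rightarrow>
     (case q of Some j \<Rightarrow> \<Omega> $ i $ j > 0 | None \<Rightarrow> \<not> (\<exists>j. \<Omega> $ i $ j > 0)))"

definition alB :: "real ^ 'n ^ 'm \<Rightarrow> 'm::finite option \<Rightarrow> 'n::finite option \<Rightarrow> bool" where
  "alB \<Omega> p q = (case q of None \<Rightarrow> False | Some j \<Rightarrow>
     (case p of Some i \<Rightarrow> \<Omega> $ i $ j > 0 | None \<Rightarrow> \<not> (\<exists>i. \<Omega> $ i $ j > 0)))"

definition LL :: "real ^ 'm \<Rightarrow> real ^ 'n \<Rightarrow> real ^ 'n ^ 'm
    \<Rightarrow> (('m::finite, 'n::finite) mat \<times> ('m, 'n) mat) set" where
  "LL a b \<Omega> = {(A, B).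
      (\<forall>p q. \<not> alA \<Omega> p q \<longrightarrow> A $ p $ q = 0) \<and>
      (\<forall>p q. \<not> alB \<Omega> p q \<longrightarrow> B $ p $ q = 0) \<and>
      (\<forall>i. a $ i = (\<Sum>j\<in>UNIV. A $ Some i $ j)) \<and>
      (\<forall>j. b $ j = (\<Sum>i\<in>UNIV. B $ i $ Some j))}"

lemma AAt_iff: "(A, B) \<in> AAt a b \<Omega> \<longleftrightarrow> (A, B) \<in> LL a b \<Omega> \<and> (\<forall>p q. A $ p $ q \<ge> 0 \<and> B $ p $ q \<ge> 0)"
  unfolding AAt_def AA_def LL_def alA_def alB_def
  apply (auto split: option.splits)
  apply (metis not_le option.exhaust)+
  done
lemma cs_main:
  fixes x c :: "'a::finite \<Rightarrow> real"
  assumes x0: "\<And>j. x j \<ge> 0" and c0: "\<And>j. c j \<ge> 0" and xs: "sum x UNIV = s"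
    and Dd: "D = (\<Sum>j\<in>UNIV. (c j)\<^sup>2)" and Dp: "D > 0"
  shows "(\<Sum>j\<in>UNIV. sqrt (x j) * c j) \<le> sqrt (s * D)"
    and "(\<Sum>j\<in>UNIV. sqrt (x j) * c j) = sqrt (s * D) \<Longrightarrow> (\<forall>j. x j = s * (c j)\<^sup>2 / D)"
proof -
  define S where "S = (\<Sum>j\<in>UNIV. sqrt (x j) * c j)"
  define l where "l = sqrt (s / D)"
  have s0: "s \<ge> 0" using xs x0 by (metis sum_nonneg)
  have l0: "l \<ge> 0" using s0 Dp by (simp add: l_def)
  have l2: "l\<^sup>2 = s / D" using s0 Dp by (simp add: l_def)
  have expand: "(\<Sum>j\<in>UNIV. (sqrt (x j) - l * c j)\<^sup>2) = 2 * s - 2 * l * S"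
  proof -
    have "(\<Sum>j\<in>UNIV. (sqrt (x j) - l * c j)\<^sup>2)
        = (\<Sum>j\<in>UNIV. x j - 2 * l * (sqrt (x j) * c j) + l\<^sup>2 * (c j)\<^sup>2)"
      using x0 by (intro sum.cong) (auto simp: power2_eq_square algebra_simps)
    also have "\<dots> = s - 2 * l * S + l\<^sup>2 * D"
      by (simp add: sum.distrib sum_subtractf sum_distrib_left xs S_def Dd)
    also have "l\<^sup>2 * D = s" using l2 Dp by simp
    finally show ?thesis by simp
  qed
  have ge: "(\<Sum>j\<in>UNIV. (sqrt (x j) - l * c j)\<^sup>2) \<ge> 0" by (simp add: sum_nonneg)
  have lS: "l * S \<le> s" using expand ge by simp
  have key: "l * sqrt (s * D) = s"
    using s0 Dp by (simp add: l_def real_sqrt_mult[symmetric])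
  show "S \<le> sqrt (s * D)"
  proof (cases "s = 0")
    case True
    then have "\<forall>j. x j = 0" using xs x0 by (simp add: sum_nonneg_eq_0_iff)
    then show ?thesis using True by (simp add: S_def)
  next
    case False
    then have lp: "l > 0" using s0 Dp by (simp add: l_def)
    have "l * S \<le> l * sqrt (s * D)" using lS key by simp
    then show ?thesis using lp by simp
  qed
  assume eq: "S = sqrt (s * D)"
  then have "(\<Sum>j\<in>UNIV. (sqrt (x j) - l * c j)\<^sup>2) = 0" using expand key by simp
  then have "\<forall>j. (sqrt (x j) - l * c j)\<^sup>2 = 0" by (simp add: sum_nonneg_eq_0_iff)
  then have "\<forall>j. sqrt (x j) = l * c j" by simp
  then have "\<forall>j. x j = l\<^sup>2 * (c j)\<^sup>2"
    using x0 by (metis power_mult_distrib real_sqrt_pow2)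
  then show "\<forall>j. x j = s * (c j)\<^sup>2 / D" using l2 by simp
qed

lemma cs_val:
  fixes c :: "'a::finite \<Rightarrow> real"
  assumes c0: "\<And>j. c j \<ge> 0" and s0: "s \<ge> 0"
    and Dd: "D = (\<Sum>j\<in>UNIV. (c j)\<^sup>2)" and Dp: "D > 0"
  shows "(\<Sum>j\<in>UNIV. sqrt (s * (c j)\<^sup>2 / D) * c j) = sqrt (s * D)"
proof -
  have "(\<Sum>j\<in>UNIV. sqrt (s * (c j)\<^sup>2 / D) * c j) = (\<Sum>j\<in>UNIV. sqrt (s / D) * (c j)\<^sup>2)"
    using c0 by (intro sum.cong) (auto simp: real_sqrt_mult real_sqrt_divide power2_eq_square)
  also have "\<dots> = sqrt (s / D) * D" by (simp add: sum_distrib_left Dd)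
  also have "\<dots> = sqrt (s * D)"
  proof -
    have dd: "sqrt D * sqrt D = D" using Dp by simp
    have "sqrt (s / D) * D = sqrt s / sqrt D * (sqrt D * sqrt D)" by (simp only: real_sqrt_divide dd)
    also have "\<dots> = sqrt s * sqrt D" using Dp by (simp add: field_simps)
    finally show ?thesis by (simp add: real_sqrt_mult)
  qed
  finally show ?thesis .
qed

lemma AAt_facts:
  assumes "(X, Y) \<in> AAt a b \<Omega>"
  shows "\<And>p q. X $ p $ q \<ge> 0" "\<And>p q. Y $ p $ q \<ge> 0"
    "\<And>i j. \<Omega> $ i $ j \<le> 0 \<Longrightarrow> X $ Some i $ Some j = 0"
    "\<And>i j. \<Omega> $ i $ j \<le> 0 \<Longrightarrow> Y $ Some i $ Some j = 0"
    "\<And>i j. \<Omega> $ i $ j > 0 \<Longrightarrow> X $ Some i $ None = 0"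
    "\<And>i j. \<Omega> $ i $ j > 0 \<Longrightarrow> Y $ None $ Some j = 0"
    "\<And>q. X $ None $ q = 0" "\<And>p. Y $ p $ None = 0"
    "\<And>i. a $ i = X $ Some i $ None + (\<Sum>j\<in>UNIV. X $ Some i $ Some j)"
    "\<And>j. b $ j = Y $ None $ Some j + (\<Sum>i\<in>UNIV. Y $ Some i $ Some j)"
  using assms unfolding AAt_def AA_def by (auto simp: sum_option)

lemma T1_comp:
  "snd (T1 a \<Omega> (A, B)) = B"
  "fst (T1 a \<Omega> (A, B)) $ None $ q = A $ None $ q"
  "fst (T1 a \<Omega> (A, B)) $ Some i $ None = A $ Some i $ None"
  "fst (T1 a \<Omega> (A, B)) $ Some i $ Some j =
     (if (\<Sum>k\<in>UNIV. B $ Some i $ Some k * (\<Omega> $ i $ k)\<^sup>2) > 0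
      then a $ i * B $ Some i $ Some j * (\<Omega> $ i $ j)\<^sup>2 / (\<Sum>k\<in>UNIV. B $ Some i $ Some k * (\<Omega> $ i $ k)\<^sup>2)
      else 0)"
  by (simp_all add: T1_def Let_def)

lemma T1_part:
  fixes a :: "real ^ 'm::finite" and b :: "real ^ 'n::finite" and \<Omega> :: "real ^ 'n ^ 'm"
  assumes apos: "\<forall>i. a $ i > 0"
    and xS: "(A, B) \<in> AAt a b \<Omega>" and hB: "\<And>i j. \<Omega> $ i $ j > 0 \<Longrightarrow> B $ Some i $ Some j > 0"
  shows "T1 a \<Omega> (A, B) \<in> AAt a b \<Omega>"
    and "\<And>A'. (A', B) \<in> AAt a b \<Omega> \<Longrightarrow> F \<Omega> (A', B) \<le> F \<Omega> (T1 a \<Omega> (A, B))"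
    and "\<And>A'. (A', B) \<in> AAt a b \<Omega> \<Longrightarrow> F \<Omega> (A', B) = F \<Omega> (T1 a \<Omega> (A, B)) \<Longrightarrow> A' = fst (T1 a \<Omega> (A, B))"
    and "\<And>i j. \<Omega> $ i $ j > 0 \<Longrightarrow> fst (T1 a \<Omega> (A, B)) $ Some i $ Some j > 0"
proof -
  define E where "E = fst (T1 a \<Omega> (A, B))"
  have T1eq: "T1 a \<Omega> (A, B) = (E, B)" using T1_comp(1)[of a \<Omega> A B] unfolding E_def
    by (metis prod.collapse)
  note Af = AAt_facts[OF xS]
  define c where "c i j = (if \<Omega> $ i $ j > 0 then sqrt (B $ Some i $ Some j) * \<Omega> $ i $ j else 0)" for i j
  define D where "D i = (\<Sum>k\<in>UNIV. (c i k)\<^sup>2)" for i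
  have c0: "c i j \<ge> 0" for i j using Af(2) by (simp add: c_def)
  have csq: "(c i k)\<^sup>2 = B $ Some i $ Some k * (\<Omega> $ i $ k)\<^sup>2" for i k
    using Af(2)[of "Some i" "Some k"] Af(4)[of i k]
    by (auto simp: c_def power_mult_distrib)
  have dD: "(\<Sum>k\<in>UNIV. B $ Some i $ Some k * (\<Omega> $ i $ k)\<^sup>2) = D i" for i
    by (simp add: D_def csq)
  have Dpos: "D i > 0" if "\<Omega> $ i $ j > 0" for i j
  proof -
    have "(c i j)\<^sup>2 > 0" using hB[OF that] that by (simp add: c_def)
    moreover have "(c i j)\<^sup>2 \<le> D i" unfolding D_def
      by (rule member_le_sum) auto
    ultimately show ?thesis by linarith
  qed
  have czero: "c i j = 0" if "\<not> (\<exists>j. \<Omega> $ i $ j > 0)" for i j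
    using that by (auto simp: c_def)
  have Dzero: "D i = 0" if "\<not> (\<exists>j. \<Omega> $ i $ j > 0)" for i
    using czero[OF that] by (simp add: D_def)
  have Epos_row: "E $ Some i $ Some j = a $ i * (c i j)\<^sup>2 / D i" if "\<exists>j. \<Omega> $ i $ j > 0" for i j
    using that Dpos unfolding E_def T1_comp dD by (auto simp: csq)
  have Enone_row: "E $ Some i $ Some j = 0" if "\<not> (\<exists>j. \<Omega> $ i $ j > 0)" for i j
    using Dzero[OF that] unfolding E_def T1_comp dD by simp
  have E_N: "E $ None $ q = A $ None $ q" for q unfolding E_def T1_comp by simp
  have E_SN: "E $ Some i $ None = A $ Some i $ None" for i unfolding E_def T1_comp by simp
  define R where "R X i = (\<Sum>j\<in>UNIV. sqrt (X $ Some i $ Some j * B $ Some i $ Some j) * \<Omega> $ i $ j)" for X i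
  have FR: "F \<Omega> (X, B) = (\<Sum>i\<in>UNIV. R X i)" for X by (simp add: F_def R_def)
  have Rc: "R X i = (\<Sum>j\<in>UNIV. sqrt (X $ Some i $ Some j) * c i j)"
    if "\<And>j. \<Omega> $ i $ j \<le> 0 \<Longrightarrow> X $ Some i $ Some j = 0" for X i
    unfolding R_def using that by (intro sum.cong) (auto simp: c_def real_sqrt_mult)
  have Ez: "E $ Some i $ Some j = 0" if "\<Omega> $ i $ j \<le> 0" for i j
  proof (cases "\<exists>j. \<Omega> $ i $ j > 0")
    case True then show ?thesis using that by (simp add: Epos_row c_def)
  qed (simp add: Enone_row)
  have Enn: "E $ p $ q \<ge> 0" for p q
  proof (cases p)
    case None then show ?thesis using E_N Af(1) by simp
  next
    case (Some i)
    show ?thesis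
    proof (cases q)
      case None then show ?thesis using Some E_SN Af(1) by simp
    next
      case (Some j)
      show ?thesis
      proof (cases "\<exists>j. \<Omega> $ i $ j > 0")
        case True
        have "a $ i * (c i j)\<^sup>2 / D i \<ge> 0" using apos
          by (simp add: D_def sum_nonneg less_imp_le)
        then show ?thesis using Epos_row[OF True] \<open>p = Some i\<close> Some by simp
      next
        case False then show ?thesis using Enone_row[OF False] \<open>p = Some i\<close> Some by simp
      qed
    qed
  qed
  have Esum: "a $ i = E $ Some i $ None + (\<Sum>j\<in>UNIV. E $ Some i $ Some j)" for i
  proof (cases "\<exists>j. \<Omega> $ i $ j > 0")
    case True
    then obtain j0 where j0: "\<Omega> $ i $ j0 > 0" by blast
    have "(\<Sum>j\<in>UNIV. E $ Some i $ Some j) = (\<Sum>j\<in>UNIV. a $ i * (c i j)\<^sup>2 / D i)"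
      using True by (simp add: Epos_row)
    also have "\<dots> = a $ i * D i / D i" by (simp add: D_def sum_divide_distrib[symmetric] sum_distrib_left)
    also have "\<dots> = a $ i" using Dpos[OF j0] by simp
    finally show ?thesis using E_SN Af(5)[OF j0] by simp
  next
    case False
    then have "\<And>j. A $ Some i $ Some j = 0" using Af(3) by (meson not_le)
    then show ?thesis using Af(9)[of i] False E_SN Enone_row by simp
  qed
  show ES: "T1 a \<Omega> (A, B) \<in> AAt a b \<Omega>"
    unfolding T1eq using xS Enn Esum Ez E_N E_SN Af
    unfolding AAt_def AA_def by (auto simp: sum_option)
  have Rcmp: "R X i \<le> R E i \<and> (R X i = R E i \<longrightarrow> (\<forall>j. X $ Some i $ Some j = E $ Some i $ Some j))"
    if XS: "(X, B) \<in> AAt a b \<Omega>" for X i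
  proof -
    note Xf = AAt_facts[OF XS]
    have RX: "R X i = (\<Sum>j\<in>UNIV. sqrt (X $ Some i $ Some j) * c i j)" by (rule Rc) (rule Xf(3))
    have RE: "R E i = (\<Sum>j\<in>UNIV. sqrt (E $ Some i $ Some j) * c i j)" by (rule Rc) (rule Ez)
    show ?thesis
    proof (cases "\<exists>j. \<Omega> $ i $ j > 0")
      case True
      then obtain j0 where j0: "\<Omega> $ i $ j0 > 0" by blast
      have xs: "(\<Sum>j\<in>UNIV. X $ Some i $ Some j) = a $ i" using Xf(9)[of i] Xf(5)[OF j0] by simp
      note cs = cs_main[of "\<lambda>j. X $ Some i $ Some j" "c i", OF Xf(1) c0 xs D_def Dpos[OF j0]]
      have REv: "R E i = sqrt (a $ i * D i)"
        unfolding RE using True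
        by (simp add: Epos_row cs_val[of "c i" "a $ i", OF c0 _ D_def Dpos[OF j0]] apos less_imp_le)
      show ?thesis using cs RX REv True by (auto simp: Epos_row)
    next
      case False
      then show ?thesis using RX RE czero[OF False] Enone_row[OF False] Xf(3) by (simp add: not_less)
    qed
  qed
  show "F \<Omega> (A', B) \<le> F \<Omega> (T1 a \<Omega> (A, B))" if "(A', B) \<in> AAt a b \<Omega>" for A'
    unfolding T1eq FR using Rcmp[OF that] by (intro sum_mono) auto
  show "A' = fst (T1 a \<Omega> (A, B))" if A'S: "(A', B) \<in> AAt a b \<Omega>"
    and eq: "F \<Omega> (A', B) = F \<Omega> (T1 a \<Omega> (A, B))" for A'
  proof -
    note Xf = AAt_facts[OF A'S]
    have "(\<Sum>i\<in>UNIV. R E i - R A' i) = 0" using eq unfolding T1eq FR by (simp add: sum_subtractf)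
    then have "\<forall>i. R E i - R A' i = 0"
      using Rcmp[OF A'S] by (subst (asm) sum_nonneg_eq_0_iff) auto
    then have rowseq: "A' $ Some i $ Some j = E $ Some i $ Some j" for i j
      using Rcmp[OF A'S, of i] by auto
    have "A' $ p $ q = E $ p $ q" for p q
    proof (cases p)
      case None then show ?thesis using Xf(7) E_N Af(7) by simp
    next
      case (Some i)
      show ?thesis
      proof (cases q)
        case None
        show ?thesis
        proof (cases "\<exists>j. \<Omega> $ i $ j > 0")
          case True
          then show ?thesis using Some None Xf(5) Af(5) E_SN by auto
        next
          case False
          then have "\<And>j. A $ Some i $ Some j = 0" "\<And>j. A' $ Some i $ Some j = 0"
            using Af(3) Xf(3) by (meson not_le)+
          then show ?thesis using Some None Xf(9)[of i] Af(9)[of i] E_SN by simp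
        qed
      next
        case (Some j) then show ?thesis using \<open>p = Some i\<close> rowseq by simp
      qed
    qed
    then show ?thesis unfolding E_def[symmetric] by (simp add: vec_eq_iff)
  qed
  show "fst (T1 a \<Omega> (A, B)) $ Some i $ Some j > 0" if "\<Omega> $ i $ j > 0" for i j
  proof -
    have "c i j > 0" using hB[OF that] that by (simp add: c_def)
    moreover have "E $ Some i $ Some j = a $ i * (c i j)\<^sup>2 / D i" using Epos_row[of i j] that by blast
    ultimately show ?thesis unfolding E_def[symmetric] using Dpos[OF that] apos by simp
  qed
qed

lemma affine_LL: "affine (LL a b \<Omega>)"
  unfolding affine_def LL_def
  by (auto simp: sum.distrib sum_distrib_left[symmetric] distrib_right[symmetric])

lemma hull_LL: "affine hull (AAt a b \<Omega>) \<subseteq> LL a b \<Omega>"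
  by (rule hull_minimal) (auto simp: AAt_iff affine_LL)

lemma comp_le_norm: "\<bar>(X :: ('m::finite, 'n::finite) mat) $ p $ q\<bar> \<le> norm (X, Y)"
      "\<bar>(Y :: ('m::finite, 'n::finite) mat) $ p $ q\<bar> \<le> norm (X, Y)"
proof -
  have "\<bar>X $ p $ q\<bar> \<le> norm (X $ p)" using Finite_Cartesian_Product.norm_nth_le[of "X $ p" q] by simp
  also have "\<dots> \<le> norm X" by (rule Finite_Cartesian_Product.norm_nth_le)
  also have "\<dots> \<le> norm (X, Y)" by (rule norm_fst_le)
  finally show "\<bar>X $ p $ q\<bar> \<le> norm (X, Y)" .
  have "\<bar>Y $ p $ q\<bar> \<le> norm (Y $ p)" using Finite_Cartesian_Product.norm_nth_le[of "Y $ p" q] by simp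
  also have "\<dots> \<le> norm Y" by (rule Finite_Cartesian_Product.norm_nth_le)
  also have "\<dots> \<le> norm (X, Y)" by (rule norm_snd_le)
  finally show "\<bar>Y $ p $ q\<bar> \<le> norm (X, Y)" .
qed

lemma ri_of_pos:
  fixes a :: "real ^ 'm::finite" and b :: "real ^ 'n::finite" and \<Omega> :: "real ^ 'n ^ 'm"
  assumes apos: "\<forall>i. a $ i > 0" and bpos: "\<forall>j. b $ j > 0"
    and xS: "(A, B) \<in> AAt a b \<Omega>"
    and hA: "\<And>i j. \<Omega> $ i $ j > 0 \<Longrightarrow> A $ Some i $ Some j > 0"
    and hB: "\<And>i j. \<Omega> $ i $ j > 0 \<Longrightarrow> B $ Some i $ Some j > 0"
  shows "(A, B) \<in> rel_interior (AAt a b \<Omega>)"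
proof -
  note Af = AAt_facts[OF xS]
  have pA: "A $ p $ q > 0" if "alA \<Omega> p q" for p q
  proof (cases p)
    case None then show ?thesis using that by (simp add: alA_def)
  next
    case (Some i)
    show ?thesis
    proof (cases q)
      case None
      then have "\<not> (\<exists>j. \<Omega> $ i $ j > 0)" using that Some by (simp add: alA_def)
      then have "\<And>j. A $ Some i $ Some j = 0" using Af(3) by (meson not_le)
      then show ?thesis using Af(9)[of i] apos[rule_format, of i] Some None by simp
    next
      case (Some j) then show ?thesis using that \<open>p = Some i\<close> hA by (simp add: alA_def)
    qed
  qed
  have pB: "B $ p $ q > 0" if "alB \<Omega> p q" for p q
  proof (cases q)
    case None then show ?thesis using that by (simp add: alB_def)
  next
    case (Some j)
    show ?thesis
    proof (cases p)
      case None
      then have "\<not> (\<exists>i. \<Omega> $ i $ j > 0)" using that Some by (simp add: alB_def)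
      then have "\<And>i. B $ Some i $ Some j = 0" using Af(4) by (meson not_le)
      then show ?thesis using Af(10)[of j] bpos[rule_format, of j] Some None by simp
    next
      case (Some i) then show ?thesis using that \<open>q = Some j\<close> hB by (simp add: alB_def)
    qed
  qed
  define M where "M = insert 1 ((\<lambda>(p, q). A $ p $ q) ` {(p, q). alA \<Omega> p q} \<union> (\<lambda>(p, q). B $ p $ q) ` {(p, q). alB \<Omega> p q})"
  define e where "e = Min M"
  have finM: "finite M" unfolding M_def by simp
  have e0: "e > 0" unfolding e_def using finM pA pB
    by (subst Min_gr_iff) (auto simp: M_def)
  have eA: "e \<le> A $ p $ q" if "alA \<Omega> p q" for p q
    unfolding e_def using finM that by (intro Min_le) (auto simp: M_def)
  have eB: "e \<le> B $ p $ q" if "alB \<Omega> p q" for p q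
    unfolding e_def using finM that by (intro Min_le) (auto simp: M_def)
  have "ball (A, B) e \<inter> affine hull (AAt a b \<Omega>) \<subseteq> AAt a b \<Omega>"
  proof
    fix w assume w: "w \<in> ball (A, B) e \<inter> affine hull (AAt a b \<Omega>)"
    obtain W V where wWV: "w = (W, V)" by (cases w)
    have wL: "(W, V) \<in> LL a b \<Omega>" using w hull_LL wWV by blast
    have nd: "norm (W - A, V - B) < e" using w wWV norm_minus_commute[of "(A, B)" "(W, V)"] by (simp add: dist_norm)
    have dW: "\<bar>W $ p $ q - A $ p $ q\<bar> < e" for p q
      using comp_le_norm(1)[of "W - A" p q "V - B"] nd by simp
    have dV: "\<bar>V $ p $ q - B $ p $ q\<bar> < e" for p q
      using comp_le_norm(2)[of "V - B" p q "W - A"] nd by simp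
    have "W $ p $ q \<ge> 0 \<and> V $ p $ q \<ge> 0" for p q
    proof
      show "W $ p $ q \<ge> 0"
      proof (cases "alA \<Omega> p q")
        case True then show ?thesis using dW[of p q] eA[OF True] by linarith
      next
        case False then show ?thesis using wL by (simp add: LL_def)
      qed
      show "V $ p $ q \<ge> 0"
      proof (cases "alB \<Omega> p q")
        case True then show ?thesis using dV[of p q] eB[OF True] by linarith
      next
        case False then show ?thesis using wL by (simp add: LL_def)
      qed
    qed
    then show "w \<in> AAt a b \<Omega>" using wL wWV by (simp add: AAt_iff)
  qed
  then show ?thesis using xS e0 by (auto simp: mem_rel_interior_ball)
qed

lemma ri_posB:
  fixes a :: "real ^ 'm::finite" and b :: "real ^ 'n::finite" and \<Omega> :: "real ^ 'n ^ 'm"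
  assumes bpos: "\<forall>j. b $ j > 0"
    and xri: "(A, B) \<in> rel_interior (AAt a b \<Omega>)" and om: "\<Omega> $ i $ j > 0"
  shows "B $ Some i $ Some j > 0"
proof (rule ccontr)
  assume "\<not> B $ Some i $ Some j > 0"
  have xS: "(A, B) \<in> AAt a b \<Omega>" using xri rel_interior_subset by blast
  note Af = AAt_facts[OF xS]
  have B0: "B $ Some i $ Some j = 0" using \<open>\<not> _\<close> Af(2)[of "Some i" "Some j"] by simp
  have bj: "b $ j = (\<Sum>k\<in>UNIV. B $ k $ Some j)" using xS by (simp add: AAt_def AA_def)
  have "\<exists>k. B $ k $ Some j > 0"
  proof (rule ccontr)
    assume "\<not> ?thesis"
    then have "\<And>k. B $ k $ Some j = 0" using Af(2) by (meson less_eq_real_def not_less)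
    then show False using bj bpos[rule_format, of j] by simp
  qed
  then obtain k where k: "B $ k $ Some j > 0" by blast
  have kne: "k \<noteq> Some i" using k B0 by auto
  define s where "s = B $ k $ Some j"
  define Y where "Y = (\<chi> p q. B $ p $ q + (if q = Some j then (if p = Some i then s else 0) - (if p = k then s else 0) else 0))"
  have Ycomp: "Y $ p $ q = B $ p $ q + (if q = Some j then (if p = Some i then s else 0) - (if p = k then s else 0) else 0)" for p q
    by (simp add: Y_def)
  have yS: "(A, Y) \<in> AAt a b \<Omega>"
  proof -
    have "(\<Sum>p\<in>UNIV. Y $ p $ Some j') = (\<Sum>p\<in>UNIV. B $ p $ Some j')" for j'
    proof (cases "j' = j")
      case True
      have "(\<Sum>p\<in>UNIV. Y $ p $ Some j') = (\<Sum>p\<in>UNIV. B $ p $ Some j') + ((\<Sum>p\<in>UNIV. (if p = Some i then s else 0)) - (\<Sum>p\<in>UNIV. (if p = k then s else 0)))"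
        using True by (simp add: Ycomp sum.distrib sum_subtractf)
      then show ?thesis by simp
    next
      case False then show ?thesis by (simp add: Ycomp)
    qed
    moreover have "Y $ p $ q \<ge> 0" for p q
      using Af(2)[of p q] kne k by (auto simp: Ycomp s_def)
    moreover have "\<not> alB \<Omega> p q \<longrightarrow> Y $ p $ q = 0" for p q
    proof -
      have "alB \<Omega> (Some i) (Some j)" using om by (simp add: alB_def)
      moreover have "\<not> alB \<Omega> p q \<longrightarrow> B $ p $ q = 0" using xS by (simp add: AAt_iff LL_def)
      ultimately show ?thesis by (auto simp: Ycomp s_def)
    qed
    ultimately show ?thesis using xS by (auto simp: AAt_iff LL_def)
  qed
  obtain e where e0: "e > 0" and eb: "ball (A, B) e \<inter> affine hull (AAt a b \<Omega>) \<subseteq> AAt a b \<Omega>"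
    using xri by (auto simp: mem_rel_interior_ball)
  define d where "d = (A, Y) - (A, B)"
  define t where "t = e / (2 * (norm d + 1))"
  have nd: "0 < 2 * (norm d + 1)" by (smt (verit) norm_ge_zero)
  have t0: "t > 0" using divide_pos_pos[OF e0 nd] by (simp only: t_def)
  define z where "z = (1 + t) *\<^sub>R (A, B) + (- t) *\<^sub>R (A, Y)"
  have zh: "z \<in> affine hull (AAt a b \<Omega>)"
    unfolding z_def
    by (rule mem_affine[OF affine_affine_hull]) (use xS yS hull_subset[of "AAt a b \<Omega>" affine] in auto)
  have zd: "(A, B) - z = t *\<^sub>R d" unfolding z_def d_def by (simp add: algebra_simps)
  have "norm (t *\<^sub>R d) < e"
  proof -
    have "norm (t *\<^sub>R d) = t * norm d" using t0 by simp
    also have "\<dots> < t * (2 * (norm d + 1))"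
    proof -
      have "norm d < 2 * (norm d + 1)" by (smt (verit) norm_ge_zero)
      from mult_strict_left_mono[OF this t0] show ?thesis .
    qed
    also have "\<dots> = e" unfolding t_def using nd by (metis less_irrefl nonzero_eq_divide_eq)
    finally show ?thesis .
  qed
  then have "z \<in> ball (A, B) e" using zd by (simp add: dist_norm)
  then have zS: "z \<in> AAt a b \<Omega>" using zh eb by blast
  have "snd z $ Some i $ Some j = - t * s"
    unfolding z_def using B0 kne by (simp add: Ycomp algebra_simps)
  moreover have "s > 0" using k s_def by simp
  ultimately have "snd z $ Some i $ Some j < 0" using t0 by (simp add: mult_pos_pos)
  moreover have "snd z $ Some i $ Some j \<ge> 0" using zS AAt_facts(2)[of "fst z" "snd z"] by simp
  ultimately show False by simp
qed

definition sw :: "('m::finite, 'n::finite) mat \<times> ('m, 'n) mat \<Rightarrow> ('n, 'm) mat \<times> ('n, 'm) mat" where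
  "sw x = ((\<chi> i j. snd x $ j $ i), (\<chi> i j. fst x $ j $ i))"

definition trO :: "real ^ 'n ^ 'm \<Rightarrow> real ^ 'm ^ 'n" where
  "trO \<Omega> = (\<chi> i j. \<Omega> $ j $ i)"

lemma sw_sw[simp]: "sw (sw x) = x"
  by (simp add: sw_def vec_eq_iff prod_eq_iff)

lemma trO_trO[simp]: "trO (trO \<Omega>) = \<Omega>"
  by (simp add: trO_def vec_eq_iff)

lemma sw_comp[simp]: "fst (sw x) $ i $ j = snd x $ j $ i" "snd (sw x) $ i $ j = fst x $ j $ i"
  by (simp_all add: sw_def)

lemma trO_comp[simp]: "trO \<Omega> $ i $ j = \<Omega> $ j $ i"
  by (simp add: trO_def)

lemma sw_AAt: "sw x \<in> AAt b a (trO \<Omega>) \<longleftrightarrow> x \<in> AAt a b \<Omega>"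
  by (cases x) (auto simp: AAt_def AA_def sw_def)

lemma sw_image: "AAt b a (trO \<Omega>) = sw ` AAt a b \<Omega>"
proof
  show "AAt b a (trO \<Omega>) \<subseteq> sw ` AAt a b \<Omega>"
  proof
    fix y assume "y \<in> AAt b a (trO \<Omega>)"
    then have "sw y \<in> AAt a b \<Omega>" using sw_AAt[of "sw y" b a \<Omega>] by simp
    then show "y \<in> sw ` AAt a b \<Omega>" by (metis image_eqI sw_sw)
  qed
qed (auto simp: sw_AAt)

lemma F_sw: "F (trO \<Omega>) (sw x) = F \<Omega> x"
  unfolding F_def by (subst sum.swap) (simp add: mult.commute)

lemma linear_sw: "linear sw"
  by (rule linearI) (simp_all add: sw_def vec_eq_iff prod_eq_iff)

lemma inj_sw: "inj sw"
  by (metis injI sw_sw)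

lemma ri_sw: "rel_interior (AAt b a (trO \<Omega>)) = sw ` rel_interior (AAt a b \<Omega>)"
  unfolding sw_image
  by (rule rel_interior_injective_linear_image[OF linear_conv_bounded_linear[THEN iffD1, OF linear_sw] inj_sw])

lemma T2_sw: "T2 b \<Omega> x = sw (T1 b (trO \<Omega>) (sw x))"
  by (simp add: T2_def T1_def sw_def Let_def vec_eq_iff prod_eq_iff split: option.splits)

lemma ri_posA:
  fixes a :: "real ^ 'm::finite" and b :: "real ^ 'n::finite" and \<Omega> :: "real ^ 'n ^ 'm"
  assumes apos: "\<forall>i. a $ i > 0"
    and xri: "(A, B) \<in> rel_interior (AAt a b \<Omega>)" and om: "\<Omega> $ i $ j > 0"
  shows "A $ Some i $ Some j > 0"
proof -
  have "sw (A, B) \<in> rel_interior (AAt b a (trO \<Omega>))" using xri by (simp add: ri_sw)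
  then have "sw (A, B) = (fst (sw (A, B)), snd (sw (A, B)))
    \<and> (fst (sw (A, B)), snd (sw (A, B))) \<in> rel_interior (AAt b a (trO \<Omega>))" by simp
  from ri_posB[OF apos conjunct2[OF this], of j i] om show ?thesis by simp
qed

lemma T1_ri:
  fixes a :: "real ^ 'm::finite" and b :: "real ^ 'n::finite" and \<Omega> :: "real ^ 'n ^ 'm"
  assumes apos: "\<forall>i. a $ i > 0" and bpos: "\<forall>j. b $ j > 0"
    and xri: "x \<in> rel_interior (AAt a b \<Omega>)"
  shows "T1 a \<Omega> x \<in> rel_interior (AAt a b \<Omega>)"
proof -
  obtain A B where x: "x = (A, B)" by (cases x)
  have xS: "(A, B) \<in> AAt a b \<Omega>" using xri rel_interior_subset x by blast
  have hB: "\<And>i j. \<Omega> $ i $ j > 0 \<Longrightarrow> B $ Some i $ Some j > 0"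
    using ri_posB[OF bpos] xri x by blast
  note TP = T1_part[OF apos xS hB]
  have eq: "T1 a \<Omega> (A, B) = (fst (T1 a \<Omega> (A, B)), B)" using T1_comp(1)[of a \<Omega> A B]
    by (metis prod.collapse)
  show ?thesis unfolding x
    apply (subst eq)
    apply (rule ri_of_pos[OF apos bpos])
    using TP(1) eq apply simp
    using TP(4) apply simp
    using hB apply simp
    done
qed

lemma T1_opt:
  fixes a :: "real ^ 'm::finite" and b :: "real ^ 'n::finite" and \<Omega> :: "real ^ 'n ^ 'm"
  assumes apos: "\<forall>i. a $ i > 0" and bpos: "\<forall>j. b $ j > 0"
    and xri: "(A, B) \<in> rel_interior (AAt a b \<Omega>)"
  shows "T1 a \<Omega> (A, B) \<in> AAt a b \<Omega>" "snd (T1 a \<Omega> (A, B)) = B"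
    and "\<And>A'. (A', B) \<in> AAt a b \<Omega> \<Longrightarrow> F \<Omega> (A', B) \<le> F \<Omega> (T1 a \<Omega> (A, B))"
    and "\<And>A'. (A', B) \<in> AAt a b \<Omega> \<Longrightarrow> F \<Omega> (A', B) = F \<Omega> (T1 a \<Omega> (A, B)) \<Longrightarrow> A' = fst (T1 a \<Omega> (A, B))"
proof -
  have xS: "(A, B) \<in> AAt a b \<Omega>" using xri rel_interior_subset by blast
  have hB: "\<And>i j. \<Omega> $ i $ j > 0 \<Longrightarrow> B $ Some i $ Some j > 0"
    using ri_posB[OF bpos] xri by blast
  note TP = T1_part[OF apos xS hB]
  show "T1 a \<Omega> (A, B) \<in> AAt a b \<Omega>" by (rule TP(1))
  show "snd (T1 a \<Omega> (A, B)) = B" by (rule T1_comp(1))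
  show "\<And>A'. (A', B) \<in> AAt a b \<Omega> \<Longrightarrow> F \<Omega> (A', B) \<le> F \<Omega> (T1 a \<Omega> (A, B))" by (rule TP(2))
  show "\<And>A'. (A', B) \<in> AAt a b \<Omega> \<Longrightarrow> F \<Omega> (A', B) = F \<Omega> (T1 a \<Omega> (A, B)) \<Longrightarrow> A' = fst (T1 a \<Omega> (A, B))"
    by (rule TP(3))
qed

lemma sup_from:
  fixes f :: "'a \<Rightarrow> real"
  assumes "z \<in> P" "\<And>p. p \<in> P \<Longrightarrow> f p \<le> f z" "\<And>p. p \<in> P \<Longrightarrow> f p = f z \<Longrightarrow> p = z"
  shows "z \<in> P \<and> f z = (SUP p\<in>P. f p) \<and> (\<forall>p\<in>P. f p = (SUP q\<in>P. f q) \<longrightarrow> p = z)"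
proof -
  have "(SUP p\<in>P. f p) = f z" using assms by (intro cSup_eq_maximum) auto
  then show ?thesis using assms by auto
qed

lemma T1_sup:
  fixes a :: "real ^ 'm::finite" and b :: "real ^ 'n::finite" and \<Omega> :: "real ^ 'n ^ 'm"
  assumes apos: "\<forall>i. a $ i > 0" and bpos: "\<forall>j. b $ j > 0"
    and xri: "(A, B) \<in> rel_interior (AAt a b \<Omega>)"
  shows "T1 a \<Omega> (A, B) \<in> {(A', B') \<in> AAt a b \<Omega>. B' = B} \<and>
             F \<Omega> (T1 a \<Omega> (A, B)) = (SUP p\<in>{(A', B') \<in> AAt a b \<Omega>. B' = B}. F \<Omega> p) \<and>
             (\<forall>p \<in> {(A', B') \<in> AAt a b \<Omega>. B' = B}.
                F \<Omega> p = (SUP q\<in>{(A', B') \<in> AAt a b \<Omega>. B' = B}. F \<Omega> q) \<longrightarrow> p = T1 a \<Omega> (A, B))"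
proof (rule sup_from)
  note O = T1_opt[OF apos bpos xri]
  have eq: "T1 a \<Omega> (A, B) = (fst (T1 a \<Omega> (A, B)), B)" using O(2) by (metis prod.collapse)
  show "T1 a \<Omega> (A, B) \<in> {(A', B') \<in> AAt a b \<Omega>. B' = B}" using O(1) O(2) eq by auto
  show "F \<Omega> p \<le> F \<Omega> (T1 a \<Omega> (A, B))" if "p \<in> {(A', B') \<in> AAt a b \<Omega>. B' = B}" for p
    using that O(3) by auto
  show "p = T1 a \<Omega> (A, B)" if "p \<in> {(A', B') \<in> AAt a b \<Omega>. B' = B}"
    and "F \<Omega> p = F \<Omega> (T1 a \<Omega> (A, B))" for p
    using that O(4) eq by auto
qed

lemma T2_sup:
  fixes a :: "real ^ 'm::finite" and b :: "real ^ 'n::finite" and \<Omega> :: "real ^ 'n ^ 'm"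
  assumes apos: "\<forall>i. a $ i > 0" and bpos: "\<forall>j. b $ j > 0"
    and xri: "(A, B) \<in> rel_interior (AAt a b \<Omega>)"
  shows "T2 b \<Omega> (A, B) \<in> {(A', B') \<in> AAt a b \<Omega>. A' = A} \<and>
             F \<Omega> (T2 b \<Omega> (A, B)) = (SUP p\<in>{(A', B') \<in> AAt a b \<Omega>. A' = A}. F \<Omega> p) \<and>
             (\<forall>p \<in> {(A', B') \<in> AAt a b \<Omega>. A' = A}.
                F \<Omega> p = (SUP q\<in>{(A', B') \<in> AAt a b \<Omega>. A' = A}. F \<Omega> q) \<longrightarrow> p = T2 b \<Omega> (A, B))"
proof (rule sup_from)
  define A1 where "A1 = fst (sw (A, B))"
  define B1 where "B1 = snd (sw (A, B))"
  have swAB: "sw (A, B) = (A1, B1)" by (simp add: A1_def B1_def)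
  have ri1: "(A1, B1) \<in> rel_interior (AAt b a (trO \<Omega>))" using xri swAB[symmetric] by (simp add: ri_sw)
  note O = T1_opt[OF bpos apos ri1]
  define z where "z = T1 b (trO \<Omega>) (A1, B1)"
  have T2z: "T2 b \<Omega> (A, B) = sw z" by (simp add: T2_sw swAB z_def)
  have zeq: "z = (fst z, B1)" using O(2) z_def by (metis prod.collapse)
  have fsw: "fst (sw z) = A"
    using zeq swAB by (metis sw_sw prod.collapse sw_def fst_conv snd_conv)
  have swS: "sw z \<in> AAt a b \<Omega>" using O(1) sw_AAt[of "sw z" b a \<Omega>] by (simp add: z_def)
  show "T2 b \<Omega> (A, B) \<in> {(A', B') \<in> AAt a b \<Omega>. A' = A}"
    unfolding T2z using swS fsw by (cases "sw z") auto
  have key: "sw p = (fst (sw p), B1) \<and> (fst (sw p), B1) \<in> AAt b a (trO \<Omega>)"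
    if pP0: "p \<in> {(A', B') \<in> AAt a b \<Omega>. A' = A}" for p
  proof -
    obtain B' where p: "p = (A, B')" "(A, B') \<in> AAt a b \<Omega>" using pP0 by blast
    have "snd (sw p) = B1" using p swAB by (metis sw_def snd_conv fst_conv)
    then show ?thesis using sw_AAt[of p b a \<Omega>] p by (metis prod.collapse)
  qed
  show "F \<Omega> p \<le> F \<Omega> (T2 b \<Omega> (A, B))" if "p \<in> {(A', B') \<in> AAt a b \<Omega>. A' = A}" for p
  proof -
    have "F \<Omega> p = F (trO \<Omega>) (sw p)" by (simp add: F_sw)
    also have "\<dots> \<le> F (trO \<Omega>) z" using O(3)[OF conjunct2[OF key[OF that]]] key[OF that] z_def by simp
    also have "\<dots> = F \<Omega> (T2 b \<Omega> (A, B))" using F_sw[of "trO \<Omega>" z] by (simp add: T2z)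
    finally show ?thesis .
  qed
  show "p = T2 b \<Omega> (A, B)" if pP: "p \<in> {(A', B') \<in> AAt a b \<Omega>. A' = A}"
    and pe: "F \<Omega> p = F \<Omega> (T2 b \<Omega> (A, B))" for p
  proof -
    have "F (trO \<Omega>) (fst (sw p), B1) = F (trO \<Omega>) (T1 b (trO \<Omega>) (A1, B1))"
      using pe key[OF pP] F_sw[of "trO \<Omega>" z] F_sw[of \<Omega> p] by (simp add: T2z z_def)
    then have "fst (sw p) = fst z" using O(4)[OF conjunct2[OF key[OF pP]]] z_def by simp
    then have "sw p = z" using key[OF pP] zeq by simp
    then show ?thesis using T2z by (metis sw_sw)
  qed
qed

theorem lemma2p16:
  fixes a :: "real ^ 'm::finite" and b :: "real ^ 'n::finite" and \<Omega> :: "real ^ 'n ^ 'm"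
  assumes "\<forall>i. a $ i > 0" and "\<forall>j. b $ j > 0"
  shows "(\<forall>x \<in> rel_interior (AAt a b \<Omega>).
            T1 a \<Omega> x \<in> rel_interior (AAt a b \<Omega>) \<and> T2 b \<Omega> x \<in> rel_interior (AAt a b \<Omega>))
       \<and> (\<forall>A B. (A, B) \<in> rel_interior (AAt a b \<Omega>) \<longrightarrow>
            (T1 a \<Omega> (A, B) \<in> {(A', B') \<in> AAt a b \<Omega>. B' = B} \<and>
             F \<Omega> (T1 a \<Omega> (A, B)) = (SUP p\<in>{(A', B') \<in> AAt a b \<Omega>. B' = B}. F \<Omega> p) \<and>
             (\<forall>p \<in> {(A', B') \<in> AAt a b \<Omega>. B' = B}.
                F \<Omega> p = (SUP q\<in>{(A', B') \<in> AAt a b \<Omega>. B' = B}. F \<Omega> q) \<longrightarrow> p = T1 a \<Omega> (A, B)))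
          \<and> (T2 b \<Omega> (A, B) \<in> {(A', B') \<in> AAt a b \<Omega>. A' = A} \<and>
             F \<Omega> (T2 b \<Omega> (A, B)) = (SUP p\<in>{(A', B') \<in> AAt a b \<Omega>. A' = A}. F \<Omega> p) \<and>
             (\<forall>p \<in> {(A', B') \<in> AAt a b \<Omega>. A' = A}.
                F \<Omega> p = (SUP q\<in>{(A', B') \<in> AAt a b \<Omega>. A' = A}. F \<Omega> q) \<longrightarrow> p = T2 b \<Omega> (A, B))))"
proof -
  have P1: "T1 a \<Omega> x \<in> rel_interior (AAt a b \<Omega>) \<and> T2 b \<Omega> x \<in> rel_interior (AAt a b \<Omega>)"
    if xri: "x \<in> rel_interior (AAt a b \<Omega>)" for x
  proof
    show "T1 a \<Omega> x \<in> rel_interior (AAt a b \<Omega>)" by (rule T1_ri[OF assms xri])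
    have "sw x \<in> rel_interior (AAt b a (trO \<Omega>))" using xri by (simp add: ri_sw)
    then have "T1 b (trO \<Omega>) (sw x) \<in> rel_interior (AAt b a (trO \<Omega>))" by (rule T1_ri[OF assms(2,1)])
    then have "sw (T1 b (trO \<Omega>) (sw x)) \<in> sw ` rel_interior (AAt b a (trO \<Omega>))" by blast
    also have "sw ` rel_interior (AAt b a (trO \<Omega>)) = rel_interior (AAt a b \<Omega>)"
      using ri_sw[of a b "trO \<Omega>"] by simp
    finally show "T2 b \<Omega> x \<in> rel_interior (AAt a b \<Omega>)" by (simp add: T2_sw)
  qed
  show ?thesis
    apply (rule conjI)
     apply (use P1 in blast)
    apply (intro allI impI)
    apply (rule conjI)
     apply (erule T1_sup[OF assms])
    apply (erule T2_sup[OF assms])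
    done
qed

end
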